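(* If $X$ is a proper Gromov hyperbolic geodesic metric space, then the quotient $[\partial_hX]_s$ of the horofunction boundary by the sublinear difference relation is homeomorphic to the Gromov boundary $\partial X$.
   Context: With basepoint $o$, $b_y(x)=d(x,y)-d(o,y)$; the horofunction boundary $\partial_hX$ consists of pointwise limits $b_\xi$ of $b_{y_n}$ along unbounded sequences (compact-open topology). Two points $\xi,\eta\in\partial_hX$ are sublinearly equivalent if $\lim_{n\to\infty}\sup_{d(o,x)\ge n}|b_\xi(x)-b_\eta(x)|/d(o,x)=0$; $[\partial_hX]_s$ is the quotient space. *)

theory Defs
  imports "HOL-Analysis.Analysis"
begin

definition proper_metric :: "'a::metric_space itself \<Rightarrow> bool" where
  "proper_metric _ \<longleftrightarrow> (\<forall>(x::'a) r. compact (cball x r))"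

definition geodesic_metric :: "'a::metric_space itself \<Rightarrow> bool" where
  "geodesic_metric _ \<longleftrightarrow> (\<forall>x y::'a. \<exists>\<gamma>::real \<Rightarrow> 'a. \<gamma> 0 = x \<and> \<gamma> (dist x y) = y \<and>
      (\<forall>s\<in>{0..dist x y}. \<forall>t\<in>{0..dist x y}. dist (\<gamma> s) (\<gamma> t) = \<bar>s - t\<bar>))"

definition gromov_product :: "'a::metric_space \<Rightarrow> 'a \<Rightarrow> 'a \<Rightarrow> real" where
  "gromov_product w x y = (dist w x + dist w y - dist x y) / 2"

definition gromov_hyperbolic :: "'a::metric_space itself \<Rightarrow> bool" where
  "gromov_hyperbolic _ \<longleftrightarrow> (\<exists>\<delta>\<ge>0. \<forall>w x y z::'a.
      gromov_product w x z \<ge> min (gromov_product w x y) (gromov_product w y z) - \<delta>)"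

definition busemann :: "'a::metric_space \<Rightarrow> 'a \<Rightarrow> 'a \<Rightarrow> real" where
  "busemann p y x = dist x y - dist p y"

definition horofunction_boundary :: "'a::metric_space \<Rightarrow> ('a \<Rightarrow> real) set" where
  "horofunction_boundary p = {\<xi>. \<exists>y::nat \<Rightarrow> 'a.
      filterlim (\<lambda>n. dist p (y n)) at_top sequentially \<and>
      (\<forall>x. (\<lambda>n. busemann p (y n) x) \<longlonglongrightarrow> \<xi> x)}"

definition compact_open_topology :: "('a::topological_space \<Rightarrow> 'b::topological_space) topology" where
  "compact_open_topology = topology_generated_by {{f. f ` K \<subseteq> U} | K U. compact K \<and> open U}"

definition horofunction_topology :: "'a::metric_space \<Rightarrow> ('a \<Rightarrow> real) topology" where
  "horofunction_topology p = subtopology compact_open_topology (horofunction_boundary p)"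

text \<open>Sublinear equivalence: the limit over n of the supremum over d(p,x) >= n of
  |xi x - eta x| / d(p,x) is 0, written out with epsilon and N.\<close>
definition sublinear_equiv :: "'a::metric_space \<Rightarrow> ('a \<Rightarrow> real) \<Rightarrow> ('a \<Rightarrow> real) \<Rightarrow> bool" where
  "sublinear_equiv p \<xi> \<eta> \<longleftrightarrow> (\<forall>\<epsilon>>0. \<exists>N::nat. \<forall>n\<ge>N. \<forall>x. dist p x \<ge> real n \<longrightarrow>
      \<bar>\<xi> x - \<eta> x\<bar> / dist p x \<le> \<epsilon>)"

definition equiv_class_in :: "'a topology \<Rightarrow> ('a \<Rightarrow> 'a \<Rightarrow> bool) \<Rightarrow> 'a \<Rightarrow> 'a set" where
  "equiv_class_in T R x = {y \<in> topspace T. R x y}"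

definition quotient_topology :: "'a topology \<Rightarrow> ('a \<Rightarrow> 'a \<Rightarrow> bool) \<Rightarrow> 'a set topology" where
  "quotient_topology T R = topology (\<lambda>U. U \<subseteq> equiv_class_in T R ` topspace T \<and>
      openin T {x \<in> topspace T. equiv_class_in T R x \<in> U})"

definition converges_at_infinity :: "'a::metric_space \<Rightarrow> (nat \<Rightarrow> 'a) \<Rightarrow> bool" where
  "converges_at_infinity p x \<longleftrightarrow> (\<forall>M. \<exists>N. \<forall>i\<ge>N. \<forall>j\<ge>N. gromov_product p (x i) (x j) \<ge> M)"

definition seq_equiv :: "'a::metric_space \<Rightarrow> (nat \<Rightarrow> 'a) \<Rightarrow> (nat \<Rightarrow> 'a) \<Rightarrow> bool" where
  "seq_equiv p x y \<longleftrightarrow> (\<forall>M. \<exists>N. \<forall>i\<ge>N. \<forall>j\<ge>N. gromov_product p (x i) (y j) \<ge> M)"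

definition gromov_boundary :: "'a::metric_space \<Rightarrow> (nat \<Rightarrow> 'a) set set" where
  "gromov_boundary p = (\<lambda>x. {y. converges_at_infinity p y \<and> seq_equiv p x y}) ` {x. converges_at_infinity p x}"

text \<open>Basic neighbourhoods V(xi,r): classes eta containing sequences x in xi, y in eta with
  liminf_{i,j} (x_i . y_j)_p >= r.\<close>
definition gromov_nbhd :: "'a::metric_space \<Rightarrow> (nat \<Rightarrow> 'a) set \<Rightarrow> real \<Rightarrow> (nat \<Rightarrow> 'a) set set" where
  "gromov_nbhd p \<xi> r = {\<eta> \<in> gromov_boundary p. \<exists>x\<in>\<xi>. \<exists>y\<in>\<eta>.
      \<forall>\<epsilon>>0. \<exists>N. \<forall>i\<ge>N. \<forall>j\<ge>N. gromov_product p (x i) (y j) \<ge> r - \<epsilon>}"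

definition gromov_boundary_topology :: "'a::metric_space \<Rightarrow> (nat \<Rightarrow> 'a) set topology" where
  "gromov_boundary_topology p = topology (\<lambda>U. U \<subseteq> gromov_boundary p \<and>
      (\<forall>\<xi>\<in>U. \<exists>r. gromov_nbhd p \<xi> r \<subseteq> U))"

lemma gromov_nbhd_mono: "r \<le> s \<Longrightarrow> gromov_nbhd p \<xi> s \<subseteq> gromov_nbhd p \<xi> r"
proof
  fix \<eta> assume "r \<le> s" "\<eta> \<in> gromov_nbhd p \<xi> s"
  then show "\<eta> \<in> gromov_nbhd p \<xi> r"
  proof -
    from \<open>\<eta> \<in> gromov_nbhd p \<xi> s\<close> obtain x y where xy: "\<eta> \<in> gromov_boundary p" "x \<in> \<xi>" "y \<in> \<eta>"
      "\<forall>\<epsilon>>0. \<exists>N. \<forall>i\<ge>N. \<forall>j\<ge>N. gromov_product p (x i) (y j) \<ge> s - \<epsilon>"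
      unfolding gromov_nbhd_def by blast
    have "\<forall>\<epsilon>>0. \<exists>N. \<forall>i\<ge>N. \<forall>j\<ge>N. gromov_product p (x i) (y j) \<ge> r - \<epsilon>"
    proof (intro allI impI)
      fix \<epsilon> :: real assume "\<epsilon> > 0"
      with xy(4) obtain N where "\<forall>i\<ge>N. \<forall>j\<ge>N. gromov_product p (x i) (y j) \<ge> s - \<epsilon>" by blast
      with \<open>r \<le> s\<close> show "\<exists>N. \<forall>i\<ge>N. \<forall>j\<ge>N. gromov_product p (x i) (y j) \<ge> r - \<epsilon>"
        by (meson diff_right_mono order_trans)
    qed
    with xy show ?thesis unfolding gromov_nbhd_def by blast
  qed
qed

lemma istopology_gromov:
  "istopology (\<lambda>U. U \<subseteq> gromov_boundary p \<and> (\<forall>\<xi>\<in>U. \<exists>r. gromov_nbhd p \<xi> r \<subseteq> U))"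
proof -
  have inter: "S \<inter> T \<subseteq> gromov_boundary p \<and> (\<forall>\<xi>\<in>S \<inter> T. \<exists>r. gromov_nbhd p \<xi> r \<subseteq> S \<inter> T)"
    if S: "S \<subseteq> gromov_boundary p \<and> (\<forall>\<xi>\<in>S. \<exists>r. gromov_nbhd p \<xi> r \<subseteq> S)"
    and T: "T \<subseteq> gromov_boundary p \<and> (\<forall>\<xi>\<in>T. \<exists>r. gromov_nbhd p \<xi> r \<subseteq> T)" for S T
  proof (intro conjI ballI)
    show "S \<inter> T \<subseteq> gromov_boundary p" using S by blast
    fix \<xi> assume "\<xi> \<in> S \<inter> T"
    then obtain r s where "gromov_nbhd p \<xi> r \<subseteq> S" "gromov_nbhd p \<xi> s \<subseteq> T" using S T by blast
    then have "gromov_nbhd p \<xi> (max r s) \<subseteq> S \<inter> T"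
      using gromov_nbhd_mono[of r "max r s" p \<xi>] gromov_nbhd_mono[of s "max r s" p \<xi>] by auto
    then show "\<exists>r. gromov_nbhd p \<xi> r \<subseteq> S \<inter> T" by blast
  qed
  have union: "\<Union>K \<subseteq> gromov_boundary p \<and> (\<forall>\<xi>\<in>\<Union>K. \<exists>r. gromov_nbhd p \<xi> r \<subseteq> \<Union>K)"
    if K: "\<forall>U\<in>K. U \<subseteq> gromov_boundary p \<and> (\<forall>\<xi>\<in>U. \<exists>r. gromov_nbhd p \<xi> r \<subseteq> U)" for K
  proof (intro conjI ballI)
    show "\<Union>K \<subseteq> gromov_boundary p" using K by blast
    fix \<xi> assume "\<xi> \<in> \<Union>K"
    then obtain U where "U \<in> K" "\<xi> \<in> U" by blast
    with K obtain r where "gromov_nbhd p \<xi> r \<subseteq> U" by blast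
    with \<open>U \<in> K\<close> show "\<exists>r. gromov_nbhd p \<xi> r \<subseteq> \<Union>K" by blast
  qed
  show ?thesis unfolding istopology_def
    using inter union by blast
qed

end

theory Submission
  imports Defs
begin

lemma gp_sym: "gromov_product w x y = gromov_product w y x"
  unfolding gromov_product_def by (simp add: dist_commute)

lemma gp_le: "gromov_product w x y \<le> dist w x"
  unfolding gromov_product_def using dist_triangle[of w y x] by (simp add: dist_commute)

lemma gp_nonneg: "gromov_product w x y \<ge> 0"
  unfolding gromov_product_def using dist_triangle[of x y w] by (simp add: dist_commute)

lemma gp_self: "gromov_product w x x = dist w x"
  unfolding gromov_product_def by simp

lemma busemann_lip: "\<bar>busemann p y x - busemann p y x'\<bar> \<le> dist x x'"
  unfolding busemann_def using dist_triangle[of x y x'] dist_triangle[of x' y x]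
  by (simp add: dist_commute abs_le_iff)

lemma busemann_gp: "busemann p y z = dist p z - 2 * gromov_product p z y"
  unfolding busemann_def gromov_product_def by (simp add: dist_commute field_simps)

lemma busemann_p: "busemann p y p = 0"
  unfolding busemann_def by (simp add: dist_commute)

definition lip1 :: "('a::metric_space \<Rightarrow> real) \<Rightarrow> bool" where
  "lip1 f \<longleftrightarrow> (\<forall>x y. \<bar>f x - f y\<bar> \<le> dist x y)"

lemma lip1_busemann: "lip1 (busemann p y)"
  unfolding lip1_def using busemann_lip by blast

lemma lip1_limit:
  assumes "\<And>n. lip1 (f n)" "\<And>x. (\<lambda>n. f n x) \<longlonglongrightarrow> h x"
  shows "lip1 h"
  unfolding lip1_def
proof (intro allI)
  fix x y
  have "(\<lambda>n. \<bar>f n x - f n y\<bar>) \<longlonglongrightarrow> \<bar>h x - h y\<bar>"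
    by (intro tendsto_intros assms)
  moreover have "\<forall>n. \<bar>f n x - f n y\<bar> \<le> dist x y" using assms(1) unfolding lip1_def by blast
  ultimately show "\<bar>h x - h y\<bar> \<le> dist x y"
    by (meson LIMSEQ_le_const2)
qed

lemma lip1_continuous: "lip1 f \<Longrightarrow> continuous_on S f"
  unfolding lip1_def continuous_on_iff dist_real_def
  by (meson le_less_trans)

lemma horoE:
  assumes "h \<in> horofunction_boundary p"
  obtains y where "filterlim (\<lambda>n. dist p (y n)) at_top sequentially"
    "\<And>x. (\<lambda>n. busemann p (y n) x) \<longlonglongrightarrow> h x"
  using assms unfolding horofunction_boundary_def by blast

lemma horo_lip1: "h \<in> horofunction_boundary p \<Longrightarrow> lip1 h"
  by (erule horoE) (rule lip1_limit[OF lip1_busemann])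

lemma horo_p: "h \<in> horofunction_boundary p \<Longrightarrow> h p = 0"
proof -
  assume "h \<in> horofunction_boundary p"
  then obtain y where y: "\<And>x. (\<lambda>n. busemann p (y n) x) \<longlonglongrightarrow> h x" by (rule horoE) blast
  from y[of p] show "h p = 0" by (simp add: busemann_p LIMSEQ_const_iff)
qed

lemma horo_bound: "h \<in> horofunction_boundary p \<Longrightarrow> \<bar>h x\<bar> \<le> dist p x"
proof -
  assume a: "h \<in> horofunction_boundary p"
  have "\<bar>h x - h p\<bar> \<le> dist x p" using horo_lip1[OF a] unfolding lip1_def by blast
  then show ?thesis using horo_p[OF a] by (simp add: dist_commute)
qed

definition hg :: "'a::metric_space \<Rightarrow> ('a \<Rightarrow> real) \<Rightarrow> 'a \<Rightarrow> real" where
  "hg p h z = (dist p z - h z) / 2"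

lemma hg_tendsto:
  assumes "\<And>x. (\<lambda>n. busemann p (y n) x) \<longlonglongrightarrow> h x"
  shows "(\<lambda>n. gromov_product p z (y n)) \<longlonglongrightarrow> hg p h z"
proof -
  have "(\<lambda>n. (dist p z - busemann p (y n) z) / 2) \<longlonglongrightarrow> hg p h z"
    unfolding hg_def by (auto intro!: tendsto_intros assms)
  moreover have "\<And>n. (dist p z - busemann p (y n) z) / 2 = gromov_product p z (y n)"
    by (simp add: busemann_gp)
  ultimately show ?thesis by simp
qed

lemma hg_nonneg: "h \<in> horofunction_boundary p \<Longrightarrow> hg p h z \<ge> 0"
  unfolding hg_def using horo_bound[of h p z] by simp

locale hypsp =
  fixes p :: "'a::metric_space" and \<delta> :: real
  assumes proper: "\<And>x r. compact (cball (x::'a) r)"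
    and geod: "\<And>x y::'a. \<exists>\<gamma>::real \<Rightarrow> 'a. \<gamma> 0 = x \<and> \<gamma> (dist x y) = y \<and>
      (\<forall>s\<in>{0..dist x y}. \<forall>t\<in>{0..dist x y}. dist (\<gamma> s) (\<gamma> t) = \<bar>s - t\<bar>)"
    and delta_nonneg: "\<delta> \<ge> 0"
    and hyp: "\<And>w x y z::'a. gromov_product w x z \<ge> min (gromov_product w x y) (gromov_product w y z) - \<delta>"
begin

abbreviation "H \<equiv> horofunction_boundary p"
abbreviation "gp \<equiv> gromov_product p"

lemma hypG:
  assumes "h \<in> H"
  shows "gp z w \<ge> min (hg p h z) (hg p h w) - \<delta>"
proof -
  obtain y where y: "\<And>x. (\<lambda>n. busemann p (y n) x) \<longlonglongrightarrow> h x" using horoE[OF assms] by blast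
  have "(\<lambda>n. min (gp z (y n)) (gp w (y n)) - \<delta>) \<longlonglongrightarrow> min (hg p h z) (hg p h w) - \<delta>"
    by (intro tendsto_intros hg_tendsto y)
  moreover have "\<forall>n. min (gp z (y n)) (gp w (y n)) - \<delta> \<le> gp z w"
  proof
    fix n show "min (gp z (y n)) (gp w (y n)) - \<delta> \<le> gp z w"
      using hyp[of p z "y n" w] gp_sym[of p w "y n"] by simp
  qed
  ultimately show ?thesis by (meson LIMSEQ_le_const2)
qed

lemma hypL:
  assumes "h \<in> H"
  shows "hg p h z \<ge> min (gp z w) (hg p h w) - \<delta>"
proof -
  obtain y where y: "\<And>x. (\<lambda>n. busemann p (y n) x) \<longlonglongrightarrow> h x" using horoE[OF assms] by blast
  have "(\<lambda>n. gp z (y n)) \<longlonglongrightarrow> hg p h z"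
    by (intro tendsto_intros hg_tendsto y)
  moreover have "\<forall>n. min (gp z w) (gp w (y n)) - \<delta> \<le> gp z (y n)"
    using hyp[of p z w] by blast
  moreover have "(\<lambda>n. min (gp z w) (gp w (y n)) - \<delta>) \<longlonglongrightarrow> min (gp z w) (hg p h w) - \<delta>"
    by (intro tendsto_intros hg_tendsto y)
  ultimately show ?thesis by (meson LIMSEQ_le)
qed

end

context hypsp
begin

lemma ray_point:
  assumes "h \<in> H" "t \<ge> 0"
  shows "\<exists>z. dist p z = t \<and> h z = - t"
proof -
  obtain y where yinf: "filterlim (\<lambda>n. dist p (y n)) at_top sequentially"
    and yc: "\<And>x. (\<lambda>n. busemann p (y n) x) \<longlonglongrightarrow> h x" using horoE[OF assms(1)] by blast
  obtain N0 where N0: "\<And>n. n \<ge> N0 \<Longrightarrow> dist p (y n) \<ge> t"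
    using yinf unfolding filterlim_at_top eventually_sequentially by blast
  define \<gamma> where "\<gamma> n = (SOME \<gamma>::real \<Rightarrow> 'a. \<gamma> 0 = p \<and> \<gamma> (dist p (y n)) = y n \<and>
      (\<forall>s\<in>{0..dist p (y n)}. \<forall>t\<in>{0..dist p (y n)}. dist (\<gamma> s) (\<gamma> t) = \<bar>s - t\<bar>))" for n
  have \<gamma>: "\<gamma> n 0 = p \<and> \<gamma> n (dist p (y n)) = y n \<and>
      (\<forall>s\<in>{0..dist p (y n)}. \<forall>t\<in>{0..dist p (y n)}. dist (\<gamma> n s) (\<gamma> n t) = \<bar>s - t\<bar>)" for n
    unfolding \<gamma>_def by (rule someI_ex[OF geod])
  define w where "w n = \<gamma> (n + N0) t" for n
  have tin: "t \<in> {0..dist p (y (n + N0))}" for n using N0[of "n + N0"] assms(2) by simp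
  have zin: "0 \<in> {0..dist p (y (n + N0))}" "dist p (y (n + N0)) \<in> {0..dist p (y (n + N0))}" for n
    by auto
  have wp: "dist p (w n) = t" for n
  proof -
    have "dist (\<gamma> (n + N0) 0) (\<gamma> (n + N0) t) = \<bar>0 - t\<bar>" using \<gamma>[of "n + N0"] tin[of n] zin(1)[of n] by blast
    then show ?thesis using \<gamma>[of "n + N0"] assms(2) unfolding w_def by simp
  qed
  have wy: "busemann p (y (n + N0)) (w n) = - t" for n
  proof -
    have "dist (\<gamma> (n + N0) t) (\<gamma> (n + N0) (dist p (y (n + N0)))) = \<bar>t - dist p (y (n + N0))\<bar>"
      using \<gamma>[of "n + N0"] tin[of n] zin(2)[of n] by blast
    then have "dist (w n) (y (n + N0)) = dist p (y (n + N0)) - t"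
      using \<gamma>[of "n + N0"] tin[of n] unfolding w_def by simp
    then show ?thesis unfolding busemann_def by simp
  qed
  have "seq_compact (cball p t)" by (rule compact_imp_seq_compact[OF proper])
  moreover have "\<forall>n. w n \<in> cball p t" using wp by simp
  ultimately obtain z r where r: "strict_mono r" and wz: "(w \<circ> r) \<longlonglongrightarrow> z"
    unfolding seq_compact_def by blast
  have "(\<lambda>n. dist p ((w \<circ> r) n)) \<longlonglongrightarrow> dist p z" by (intro tendsto_intros wz)
  then have dz: "dist p z = t" using wp by (simp add: LIMSEQ_const_iff)
  define Y where "Y n = y (r n + N0)" for n
  have sm: "strict_mono (\<lambda>n. r n + N0)" using r by (simp add: strict_mono_def)
  have "((\<lambda>n. busemann p (y n) z) \<circ> (\<lambda>n. r n + N0)) \<longlonglongrightarrow> h z"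
    by (rule LIMSEQ_subseq_LIMSEQ[OF yc sm])
  then have l1: "(\<lambda>n. busemann p (Y n) z) \<longlonglongrightarrow> h z" by (simp add: Y_def o_def)
  have dd: "(\<lambda>n. dist z ((w \<circ> r) n)) \<longlonglongrightarrow> 0"
    using tendsto_dist[OF tendsto_const wz, of z] by simp
  have "(\<lambda>n. busemann p (Y n) z - busemann p (Y n) (w (r n))) \<longlonglongrightarrow> 0"
  proof (rule Lim_null_comparison[OF _ dd])
    show "\<forall>\<^sub>F n in sequentially. norm (busemann p (Y n) z - busemann p (Y n) (w (r n))) \<le> dist z ((w \<circ> r) n)"
      by (rule always_eventually) (simp add: busemann_lip)
  qed
  then have "(\<lambda>n. busemann p (Y n) z - busemann p (Y n) (w (r n)) + (- t)) \<longlonglongrightarrow> 0 + (- t)"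
    by (intro tendsto_intros)
  moreover have "(\<lambda>n. busemann p (Y n) z - busemann p (Y n) (w (r n)) + (- t)) = (\<lambda>n. busemann p (Y n) z)"
    by (rule ext) (use wy in \<open>simp add: Y_def\<close>)
  ultimately have "(\<lambda>n. busemann p (Y n) z) \<longlonglongrightarrow> - t" by simp
  with l1 have "h z = - t" using LIMSEQ_unique by blast
  with dz show ?thesis by blast
qed

definition zr :: "('a \<Rightarrow> real) \<Rightarrow> nat \<Rightarrow> 'a" where
  "zr h i = (SOME z. dist p z = real i \<and> h z = - real i)"

lemma zr:
  assumes "h \<in> H"
  shows "dist p (zr h i) = real i" "h (zr h i) = - real i"
  using someI_ex[OF ray_point[OF assms, of "real i"]] unfolding zr_def by auto

lemma hg_zr: assumes "h \<in> H" shows "hg p h (zr h i) = real i"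
  unfolding hg_def using zr[OF assms, of i] by simp

lemma zr_gp: "h \<in> H \<Longrightarrow> gp (zr h i) (zr h j) \<ge> min (real i) (real j) - \<delta>"
  using hypG[of h "zr h i" "zr h j"] hg_zr by simp

lemma zr_conv: "h \<in> H \<Longrightarrow> converges_at_infinity p (zr h)"
  unfolding converges_at_infinity_def
proof
  fix M assume h: "h \<in> H"
  show "\<exists>N. \<forall>i\<ge>N. \<forall>j\<ge>N. M \<le> gp (zr h i) (zr h j)"
  proof (intro exI allI impI)
    fix i j assume "nat \<lceil>M + \<delta>\<rceil> \<le> i" "nat \<lceil>M + \<delta>\<rceil> \<le> j"
    then have "M + \<delta> \<le> real i" "M + \<delta> \<le> real j" by linarith+
    then show "M \<le> gp (zr h i) (zr h j)" using zr_gp[OF h, of i j] by linarith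
  qed
qed

definition Phi :: "('a \<Rightarrow> real) \<Rightarrow> (nat \<Rightarrow> 'a) set" where
  "Phi h = {x. converges_at_infinity p x \<and> seq_equiv p (zr h) x}"

lemma Phi_in: "h \<in> H \<Longrightarrow> Phi h \<in> gromov_boundary p"
  unfolding gromov_boundary_def Phi_def using zr_conv by blast

definition tinf :: "(nat \<Rightarrow> real) \<Rightarrow> bool" where
  "tinf f \<longleftrightarrow> (\<forall>M. \<exists>N. \<forall>i\<ge>N. f i \<ge> M)"

lemma Phi_char:
  assumes h: "h \<in> H"
  shows "x \<in> Phi h \<longleftrightarrow> converges_at_infinity p x \<and> tinf (\<lambda>i. hg p h (x i))"
proof
  assume "x \<in> Phi h"
  then have c: "converges_at_infinity p x" and s: "seq_equiv p (zr h) x" unfolding Phi_def by auto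
  have "tinf (\<lambda>i. hg p h (x i))" unfolding tinf_def
  proof
    fix M
    obtain N where N: "\<forall>i\<ge>N. \<forall>j\<ge>N. M + \<delta> \<le> gp (zr h i) (x j)"
      using s unfolding seq_equiv_def by blast
    define i where "i = max N (nat \<lceil>M + \<delta>\<rceil>)"
    have i1: "i \<ge> N" and i2: "real i \<ge> M + \<delta>" unfolding i_def by linarith+
    show "\<exists>N. \<forall>j\<ge>N. M \<le> hg p h (x j)"
    proof (intro exI allI impI)
      fix j assume "N \<le> j"
      then have a: "M + \<delta> \<le> gp (x j) (zr h i)" using N i1 gp_sym by metis
      have "hg p h (x j) \<ge> min (gp (x j) (zr h i)) (hg p h (zr h i)) - \<delta>" by (rule hypL[OF h])
      then show "M \<le> hg p h (x j)" using a i2 hg_zr[OF h, of i] by (simp add: min_def split: if_splits)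
    qed
  qed
  with c show "converges_at_infinity p x \<and> tinf (\<lambda>i. hg p h (x i))" by blast
next
  assume a: "converges_at_infinity p x \<and> tinf (\<lambda>i. hg p h (x i))"
  have "seq_equiv p (zr h) x" unfolding seq_equiv_def
  proof
    fix M
    obtain N1 where N1: "\<forall>j\<ge>N1. M + \<delta> \<le> hg p h (x j)" using a unfolding tinf_def by blast
    show "\<exists>N. \<forall>i\<ge>N. \<forall>j\<ge>N. M \<le> gp (zr h i) (x j)"
    proof (intro exI allI impI)
      fix i j assume i: "max N1 (nat \<lceil>M + \<delta>\<rceil>) \<le> i" and j: "max N1 (nat \<lceil>M + \<delta>\<rceil>) \<le> j"
      have "gp (zr h i) (x j) \<ge> min (hg p h (zr h i)) (hg p h (x j)) - \<delta>" by (rule hypG[OF h])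
      moreover have "real i \<ge> M + \<delta>" using i by linarith
      moreover have "hg p h (x j) \<ge> M + \<delta>" using N1 j by auto
      ultimately show "M \<le> gp (zr h i) (x j)" using hg_zr[OF h, of i] by (simp add: min_def split: if_splits)
    qed
  qed
  with a show "x \<in> Phi h" unfolding Phi_def by blast
qed

lemma zr_in_Phi: "h \<in> H \<Longrightarrow> zr h \<in> Phi h"
proof -
  assume h: "h \<in> H"
  have "tinf (\<lambda>i. hg p h (zr h i))" unfolding tinf_def hg_zr[OF h]
  proof
    fix M :: real show "\<exists>N. \<forall>i\<ge>N. M \<le> real i"
      by (rule exI[of _ "nat \<lceil>M\<rceil>"]) linarith
  qed
  then show ?thesis using Phi_char[OF h, of "zr h"] zr_conv[OF h] by blast
qed

lemma bd:
  assumes h: "h \<in> H" and h': "h' \<in> H"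
    and t: "tinf (\<lambda>i. hg p h (x i))" and t': "tinf (\<lambda>i. hg p h' (x i))"
  shows "hg p h z \<ge> hg p h' z - 2 * \<delta>"
proof -
  obtain N1 where N1: "\<forall>i\<ge>N1. hg p h (x i) \<ge> hg p h' z" using t unfolding tinf_def by blast
  obtain N2 where N2: "\<forall>i\<ge>N2. hg p h' (x i) \<ge> hg p h' z" using t' unfolding tinf_def by blast
  define i where "i = max N1 N2"
  have a1: "hg p h (x i) \<ge> hg p h' z" and a2: "hg p h' (x i) \<ge> hg p h' z"
    using N1 N2 unfolding i_def by auto
  have "hg p h z \<ge> min (gp z (x i)) (hg p h (x i)) - \<delta>" by (rule hypL[OF h])
  moreover have "gp z (x i) \<ge> min (hg p h' z) (hg p h' (x i)) - \<delta>" by (rule hypG[OF h'])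
  ultimately show ?thesis using a1 a2 delta_nonneg by (simp add: min_def split: if_splits)
qed

lemma tinf_shift:
  assumes "tinf f" "\<And>i. g i \<ge> f i - c"
  shows "tinf g"
  unfolding tinf_def
proof
  fix M
  obtain N where "\<forall>i\<ge>N. f i \<ge> M + c" using assms(1) unfolding tinf_def by blast
  then show "\<exists>N. \<forall>i\<ge>N. M \<le> g i" using assms(2) by (metis add_le_cancel_right diff_add_cancel order_trans)
qed

lemma Phi_eq_if_common:
  assumes h: "h \<in> H" and h': "h' \<in> H" and x: "x \<in> Phi h" "x \<in> Phi h'"
  shows "Phi h = Phi h'" and "\<And>z. \<bar>hg p h z - hg p h' z\<bar> \<le> 2 * \<delta>"
proof -
  have t: "tinf (\<lambda>i. hg p h (x i))" and t': "tinf (\<lambda>i. hg p h' (x i))"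
    using x Phi_char[OF h] Phi_char[OF h'] by auto
  have b1: "hg p h z \<ge> hg p h' z - 2 * \<delta>" for z by (rule bd[OF h h' t t'])
  have b2: "hg p h' z \<ge> hg p h z - 2 * \<delta>" for z by (rule bd[OF h' h t' t])
  show "\<bar>hg p h z - hg p h' z\<bar> \<le> 2 * \<delta>" for z using b1[of z] b2[of z] by linarith
  show "Phi h = Phi h'"
  proof (intro set_eqI)
    fix y
    have "tinf (\<lambda>i. hg p h (y i)) \<longleftrightarrow> tinf (\<lambda>i. hg p h' (y i))"
      using tinf_shift[where f="\<lambda>i. hg p h (y i)" and g="\<lambda>i. hg p h' (y i)" and c="2*\<delta>"]
        tinf_shift[where f="\<lambda>i. hg p h' (y i)" and g="\<lambda>i. hg p h (y i)" and c="2*\<delta>"] b1 b2 by blast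
    then show "y \<in> Phi h \<longleftrightarrow> y \<in> Phi h'" using Phi_char[OF h] Phi_char[OF h'] by blast
  qed
qed

lemma Phi_eq_iff:
  assumes h: "h \<in> H" and h': "h' \<in> H"
  shows "Phi h = Phi h' \<longleftrightarrow> sublinear_equiv p h h'"
proof
  assume e: "Phi h = Phi h'"
  have b: "\<bar>hg p h z - hg p h' z\<bar> \<le> 2 * \<delta>" for z
    using Phi_eq_if_common(2)[OF h h' zr_in_Phi[OF h]] e zr_in_Phi[OF h] by blast
  have b4: "\<bar>h z - h' z\<bar> \<le> 4 * \<delta>" for z
  proof -
    have e: "hg p h z - hg p h' z = (h' z - h z) / 2" unfolding hg_def by (simp add: field_simps)
    show ?thesis using b[of z] unfolding e by (simp add: abs_le_iff)
  qed
  show "sublinear_equiv p h h'" unfolding sublinear_equiv_def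
  proof (intro allI impI)
    fix \<epsilon> :: real assume \<epsilon>: "\<epsilon> > 0"
    show "\<exists>N. \<forall>n\<ge>N. \<forall>x. real n \<le> dist p x \<longrightarrow> \<bar>h x - h' x\<bar> / dist p x \<le> \<epsilon>"
    proof (intro exI allI impI)
      fix n x assume n: "nat \<lceil>4 * \<delta> / \<epsilon>\<rceil> + 1 \<le> n" and x: "real n \<le> dist p x"
      have d1: "dist p x \<ge> 1" using n x by linarith
      have "4 * \<delta> / \<epsilon> \<le> dist p x" using n x by linarith
      then have "4 * \<delta> \<le> \<epsilon> * dist p x" using \<epsilon> by (simp add: divide_le_eq mult.commute)
      then have "\<bar>h x - h' x\<bar> \<le> \<epsilon> * dist p x" using b4[of x] by linarith
      then show "\<bar>h x - h' x\<bar> / dist p x \<le> \<epsilon>" using d1 \<epsilon> by (simp add: divide_le_eq)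
    qed
  qed
next
  assume s: "sublinear_equiv p h h'"
  show "Phi h = Phi h'"
  proof (rule ccontr)
    assume ne: "Phi h \<noteq> Phi h'"
    have "zr h \<notin> Phi h'" using Phi_eq_if_common(1)[OF h h' zr_in_Phi[OF h]] ne by blast
    then have "\<not> tinf (\<lambda>i. hg p h' (zr h i))" using Phi_char[OF h'] zr_conv[OF h] by blast
    then obtain M where M: "\<And>N. \<exists>i\<ge>N. hg p h' (zr h i) < M" unfolding tinf_def by (meson not_le)
    have small: "hg p h' (zr h j) < M + \<delta>" if j: "real j \<ge> M + 2 * \<delta> + 1" for j
    proof -
      obtain i where i: "i \<ge> j" "hg p h' (zr h i) < M" using M by blast
      have "hg p h' (zr h i) \<ge> min (gp (zr h i) (zr h j)) (hg p h' (zr h j)) - \<delta>" by (rule hypL[OF h'])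
      moreover have "gp (zr h i) (zr h j) \<ge> real j - \<delta>" using zr_gp[OF h, of i j] i(1) by simp
      ultimately show ?thesis using i(2) j by (simp add: min_def split: if_splits)
    qed
    obtain N where N: "\<forall>n\<ge>N. \<forall>x. real n \<le> dist p x \<longrightarrow> \<bar>h x - h' x\<bar> / dist p x \<le> 1"
      using s unfolding sublinear_equiv_def by (meson zero_less_one)
    define j where "j = N + nat \<lceil>2 * \<bar>M\<bar> + 2 * \<delta> + 1\<rceil> + 1"
    have j1: "real j \<ge> 2 * \<bar>M\<bar> + 2 * \<delta> + 2" and j2: "j \<ge> N" unfolding j_def by linarith+
    have "real j \<ge> M + 2 * \<delta> + 1" using j1 delta_nonneg by linarith
    then have sm: "hg p h' (zr h j) < M + \<delta>" by (rule small)
    have dj: "dist p (zr h j) = real j" "h (zr h j) = - real j" using zr[OF h] by auto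
    have "\<bar>h (zr h j) - h' (zr h j)\<bar> / dist p (zr h j) \<le> 1"
      using N j2 dj(1) by (metis order_refl)
    then have le: "\<bar>h (zr h j) - h' (zr h j)\<bar> \<le> real j" using dj j1 delta_nonneg
      by (simp add: divide_le_eq split: if_splits)
    have "h' (zr h j) = real j - 2 * hg p h' (zr h j)" unfolding hg_def using dj by (simp add: field_simps)
    then show False using le sm dj j1 by linarith
  qed
qed

end

lemma unif:
  fixes f :: "nat \<Rightarrow> 'a::metric_space \<Rightarrow> real"
  assumes K: "compact K" and lf: "\<And>n. lip1 (f n)" and lh: "lip1 h"
    and c: "\<And>x. (\<lambda>n. f n x) \<longlonglongrightarrow> h x" and e: "e > 0"
  shows "eventually (\<lambda>n. \<forall>x\<in>K. \<bar>f n x - h x\<bar> < e) sequentially"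
proof -
  have sc: "seq_compact K" using K by (rule compact_imp_seq_compact)
  have e3: "e/3 > 0" using e by simp
  have "\<exists>k. finite k \<and> k \<subseteq> K \<and> K \<subseteq> (\<Union>x\<in>k. ball x (e/3))"
    using seq_compact_imp_totally_bounded[OF sc] e3 by blast
  then obtain T where T: "finite T" "T \<subseteq> K" "K \<subseteq> (\<Union>c\<in>T. ball c (e/3))"
    by blast
  have "\<forall>c\<in>T. eventually (\<lambda>n. dist (f n c) (h c) < e/3) sequentially"
    using tendstoD[OF c e3] by blast
  then have ev: "eventually (\<lambda>n. \<forall>c\<in>T. dist (f n c) (h c) < e/3) sequentially"
    by (rule eventually_ball_finite[OF T(1)])
  show ?thesis
  proof (rule eventually_mono[OF ev], intro ballI)
    fix n x assume a: "\<forall>c\<in>T. dist (f n c) (h c) < e/3" and x: "x \<in> K"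
    from x T(3) obtain c where c0: "c \<in> T" "x \<in> ball c (e/3)" by blast
    then have c: "c \<in> T" "dist c x < e/3" by auto
    have "\<bar>f n x - f n c\<bar> \<le> dist x c" using lf unfolding lip1_def by blast
    moreover have "\<bar>h c - h x\<bar> \<le> dist c x" using lh unfolding lip1_def by blast
    moreover have "\<bar>f n c - h c\<bar> < e/3" using a c(1) by (simp add: dist_real_def)
    moreover have "dist x c = dist c x" by (rule dist_commute)
    ultimately show "\<bar>f n x - h x\<bar> < e" using c(2) by linarith
  qed
qed
lemma co_open_seq:
  fixes W :: "('a::topological_space \<Rightarrow> real) set"
  assumes "openin compact_open_topology W"
  shows "h \<in> W \<Longrightarrow> continuous_on UNIV h \<Longrightarrow>
    (\<And>K e. compact K \<Longrightarrow> e > 0 \<Longrightarrow> eventually (\<lambda>n. \<forall>x\<in>K. \<bar>f n x - h x\<bar> < e) sequentially) \<Longrightarrow>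
    eventually (\<lambda>n. f n \<in> W) sequentially"
  using assms unfolding compact_open_topology_def openin_topology_generated_by_iff
proof (induction arbitrary: h rule: generate_topology_on.induct)
  case Empty
  then show ?case by simp
next
  case (Int a b)
  then have a: "eventually (\<lambda>n. f n \<in> a) sequentially" and b: "eventually (\<lambda>n. f n \<in> b) sequentially"
    by blast+
  show ?case by (rule eventually_mono[OF eventually_conj[OF a b]]) simp
next
  case (UN K)
  then obtain k where "k \<in> K" "h \<in> k" by blast
  with UN have "eventually (\<lambda>n. f n \<in> k) sequentially" by blast
  then show ?case by (rule eventually_mono) (use \<open>k \<in> K\<close> in blast)
next
  case (Basis s)
  then obtain K U where s: "s = {f. f ` K \<subseteq> U}" and K: "compact K" and U: "open U" by blast
  have hK: "h ` K \<subseteq> U" using Basis s by blast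
  have "compact (h ` K)" using K continuous_on_subset[OF Basis(3)] by (intro compact_continuous_image) auto
  then obtain \<epsilon> where \<epsilon>: "\<epsilon> > 0" "(\<Union>x\<in>h ` K. ball x \<epsilon>) \<subseteq> U"
    using compact_subset_open_imp_ball_epsilon_subset[OF _ U hK] by blast
  have "eventually (\<lambda>n. \<forall>x\<in>K. \<bar>f n x - h x\<bar> < \<epsilon>) sequentially" using Basis(4) K \<epsilon>(1) by blast
  then show ?case
  proof (rule eventually_mono)
    fix n assume a: "\<forall>x\<in>K. \<bar>f n x - h x\<bar> < \<epsilon>"
    have "f n x \<in> U" if "x \<in> K" for x
    proof -
      have "f n x \<in> ball (h x) \<epsilon>" using a that by (simp add: dist_real_def abs_minus_commute)
      then show ?thesis using \<epsilon>(2) that by blast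
    qed
    then show "f n \<in> s" unfolding s by blast
  qed
qed

context hypsp
begin

lemma dense_countable: "\<exists>D::'a set. countable D \<and> D \<noteq> {} \<and> (\<forall>x. \<forall>e>0. \<exists>d\<in>D. dist x d < e)"
proof -
  have "\<forall>nm::nat\<times>nat. \<exists>k. finite k \<and> k \<subseteq> cball p (real (fst nm)) \<and>
      cball p (real (fst nm)) \<subseteq> (\<Union>x\<in>k. ball x (1 / real (Suc (snd nm))))"
  proof
    fix nm :: "nat \<times> nat"
    have "seq_compact (cball p (real (fst nm)))" by (rule compact_imp_seq_compact[OF proper])
    then show "\<exists>k. finite k \<and> k \<subseteq> cball p (real (fst nm)) \<and>
      cball p (real (fst nm)) \<subseteq> (\<Union>x\<in>k. ball x (1 / real (Suc (snd nm))))"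
    proof -
      assume sc: "seq_compact (cball p (real (fst nm)))"
      have "1 / real (Suc (snd nm)) > 0" by simp
      then show ?thesis using seq_compact_imp_totally_bounded[OF sc] by blast
    qed
  qed
  from choice[OF this] obtain F where F: "\<forall>nm. finite (F nm) \<and> F nm \<subseteq> cball p (real (fst nm)) \<and>
      cball p (real (fst nm)) \<subseteq> (\<Union>x\<in>F nm. ball x (1 / real (Suc (snd nm))))"
    by blast
  define D where "D = (\<Union>nm. F nm)"
  have "countable D" unfolding D_def
  proof (rule countable_UN[OF countableI_type])
    fix nm :: "nat \<times> nat"
    have "finite (F nm)" using F by blast
    then show "countable (F nm)" by (rule countable_finite)
  qed
  moreover have dense: "\<forall>x. \<forall>e>0. \<exists>d\<in>D. dist x d < e"
  proof (intro allI impI)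
    fix x and e :: real assume e: "e > 0"
    define n where "n = nat \<lceil>dist p x\<rceil>"
    define m where "m = nat \<lceil>1 / e\<rceil>"
    have "x \<in> cball p (real (fst (n, m)))" unfolding n_def by simp
    then obtain d where d: "d \<in> F (n, m)" "dist d x < 1 / real (Suc m)" using F by fastforce
    have "1 / e < real (Suc m)" unfolding m_def by linarith
    then have "1 / real (Suc m) < e" using e by (simp add: divide_less_eq mult.commute)
    then have "dist x d < e" using d(2) by (simp add: dist_commute)
    moreover have "d \<in> D" using d(1) unfolding D_def by blast
    ultimately show "\<exists>d\<in>D. dist x d < e" by blast
  qed
  moreover have "D \<noteq> {}"
  proof
    assume "D = {}" then show False using dense[rule_format, where x=p and e=1] by simp
  qed
  ultimately show ?thesis by blast
qed

lemma lip_subseq: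
  fixes f :: "nat \<Rightarrow> 'a \<Rightarrow> real"
  assumes lf: "\<And>n. lip1 (f n)" and f0: "\<And>n. f n p = 0"
  shows "\<exists>r h. strict_mono r \<and> (\<forall>x. (\<lambda>n. f (r n) x) \<longlonglongrightarrow> h x)"
proof -
  obtain D :: "'a set" where D: "countable D" "D \<noteq> {}" "\<forall>x. \<forall>e>0. \<exists>d\<in>D. dist x d < e"
    using dense_countable by blast
  define e where "e = from_nat_into D"
  have rD: "range e = D" unfolding e_def using D by simp
  have bnd: "\<bar>f n x\<bar> \<le> dist p x" for n x
  proof -
    have "\<bar>f n x - f n p\<bar> \<le> dist x p" using lf[of n] unfolding lip1_def by blast
    then show ?thesis using f0[of n] by (simp add: dist_commute)
  qed
  define S where "S = (PiE UNIV (\<lambda>k. {- dist p (e k) .. dist p (e k)}) :: (nat \<Rightarrow> real) set)"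
  have "compactin (product_topology (\<lambda>k. euclidean) UNIV) S"
    unfolding S_def compactin_PiE by simp
  then have "compact S" by (simp add: euclidean_product_topology)
  then have sc: "seq_compact S" by (rule compact_imp_seq_compact)
  define F where "F n = (\<lambda>k. f n (e k))" for n
  have "F n \<in> S" for n unfolding S_def F_def
  proof (simp add: PiE_iff, intro allI)
    fix k
    have "\<bar>f n (e k)\<bar> \<le> dist p (e k)" by (rule bnd)
    then show "- dist p (e k) \<le> f n (e k) \<and> f n (e k) \<le> dist p (e k)" by (auto simp: abs_le_iff)
  qed
  then have Fin: "\<forall>n. F n \<in> S" by blast
  obtain L r where r: "strict_mono r" and FL: "(F \<circ> r) \<longlonglongrightarrow> L"
    by (rule seq_compactE[OF sc Fin])
  have comp: "(\<lambda>n. f (r n) (e k)) \<longlonglongrightarrow> L k" for k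
  proof -
    have "continuous_on UNIV (\<lambda>x::nat\<Rightarrow>real. x k)" by (rule continuous_on_product_coordinates)
    then have "isCont (\<lambda>x::nat\<Rightarrow>real. x k) L"
      using continuous_on_eq_continuous_at[OF open_UNIV, of "\<lambda>x::nat\<Rightarrow>real. x k"] by simp
    from isCont_tendsto_compose[OF this FL] show ?thesis by (simp add: F_def o_def)
  qed
  have "\<forall>x. \<exists>l. (\<lambda>n. f (r n) x) \<longlonglongrightarrow> l"
  proof
    fix x
    have "Cauchy (\<lambda>n. f (r n) x)" unfolding Cauchy_def
    proof (intro allI impI)
      fix \<epsilon> :: real assume \<epsilon>: "\<epsilon> > 0"
      have e3: "\<epsilon>/3 > 0" using \<epsilon> by simp
      obtain d where d: "d \<in> D" "dist x d < \<epsilon>/3" using D(3) e3 by blast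
      obtain k where k: "e k = d" using rD d(1) by blast
      have "Cauchy (\<lambda>n. f (r n) (e k))" using comp by (rule LIMSEQ_imp_Cauchy)
      then obtain M where M: "\<forall>m\<ge>M. \<forall>n\<ge>M. dist (f (r m) (e k)) (f (r n) (e k)) < \<epsilon>/3"
        unfolding Cauchy_def using e3 by blast
      show "\<exists>M. \<forall>m\<ge>M. \<forall>n\<ge>M. dist (f (r m) x) (f (r n) x) < \<epsilon>"
      proof (intro exI allI impI)
        fix m n assume "M \<le> m" "M \<le> n"
        then have a: "\<bar>f (r m) d - f (r n) d\<bar> < \<epsilon>/3" using M k by (simp add: dist_real_def)
        have l1: "\<bar>f (r m) x - f (r m) d\<bar> \<le> dist x d" and l2: "\<bar>f (r n) x - f (r n) d\<bar> \<le> dist x d"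
          using lf unfolding lip1_def by blast+
        show "dist (f (r m) x) (f (r n) x) < \<epsilon>" using a d(2) l1 l2 unfolding dist_real_def abs_le_iff abs_less_iff
          by (intro conjI; elim conjE; linarith)
      qed
    qed
    then show "\<exists>l. (\<lambda>n. f (r n) x) \<longlonglongrightarrow> l" by (simp add: Cauchy_convergent_iff convergent_def)
  qed
  from choice[OF this] obtain h where "\<forall>x. (\<lambda>n. f (r n) x) \<longlonglongrightarrow> h x" by blast
  with r show ?thesis by blast
qed

lemma H_closed:
  assumes hk: "\<And>k. hk k \<in> H" and lim: "\<And>x. (\<lambda>k. hk k x) \<longlonglongrightarrow> h x"
  shows "h \<in> H"
proof -
  have "\<forall>k. \<exists>y. filterlim (\<lambda>n. dist p (y n)) at_top sequentially \<and>
      (\<forall>x. (\<lambda>n. busemann p (y n) x) \<longlonglongrightarrow> hk k x)"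
    using hk unfolding horofunction_boundary_def by blast
  from choice[OF this] obtain Y where Y: "\<forall>k. filterlim (\<lambda>n. dist p (Y k n)) at_top sequentially \<and>
      (\<forall>x. (\<lambda>n. busemann p (Y k n) x) \<longlonglongrightarrow> hk k x)" by blast
  then have Yinf: "\<And>k. filterlim (\<lambda>n. dist p (Y k n)) at_top sequentially"
    and Yc: "\<And>k x. (\<lambda>n. busemann p (Y k n) x) \<longlonglongrightarrow> hk k x" by blast+
  have "\<exists>n. (\<forall>x\<in>cball p (real k). \<bar>busemann p (Y k n) x - hk k x\<bar> < 1 / real (Suc k)) \<and>
      dist p (Y k n) \<ge> real k" for k
  proof -
    have e1: "eventually (\<lambda>n. \<forall>x\<in>cball p (real k). \<bar>busemann p (Y k n) x - hk k x\<bar> < 1 / real (Suc k)) sequentially"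
      by (rule unif[OF proper lip1_busemann horo_lip1[OF hk] Yc]) simp
    have e2: "eventually (\<lambda>n. dist p (Y k n) \<ge> real k) sequentially"
      using Yinf[of k] unfolding filterlim_at_top by blast
    from eventually_conj[OF e1 e2] show ?thesis by (simp add: eventually_sequentially) blast
  qed
  then have "\<forall>k. \<exists>n. (\<forall>x\<in>cball p (real k). \<bar>busemann p (Y k n) x - hk k x\<bar> < 1 / real (Suc k)) \<and>
      dist p (Y k n) \<ge> real k" by blast
  from choice[OF this] obtain nk where nk': "\<forall>k. (\<forall>x\<in>cball p (real k). \<bar>busemann p (Y k (nk k)) x - hk k x\<bar> < 1 / real (Suc k)) \<and>
      dist p (Y k (nk k)) \<ge> real k" by blast
  then have nk: "\<And>k. (\<forall>x\<in>cball p (real k). \<bar>busemann p (Y k (nk k)) x - hk k x\<bar> < 1 / real (Suc k))"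
    "\<And>k. dist p (Y k (nk k)) \<ge> real k" by blast+
  define Z where "Z k = Y k (nk k)" for k
  have "filterlim (\<lambda>k. dist p (Z k)) at_top sequentially"
    unfolding filterlim_at_top eventually_sequentially
  proof
    fix M :: real show "\<exists>N. \<forall>k\<ge>N. M \<le> dist p (Z k)"
    proof (intro exI allI impI)
      fix k assume "nat \<lceil>M\<rceil> \<le> k"
      then have "M \<le> real k" by linarith
      moreover have "real k \<le> dist p (Z k)" using nk(2)[of k] unfolding Z_def .
      ultimately show "M \<le> dist p (Z k)" by linarith
    qed
  qed
  moreover have "(\<lambda>k. busemann p (Z k) x) \<longlonglongrightarrow> h x" for x
    unfolding LIMSEQ_iff
  proof (intro allI impI)
    fix r :: real assume r: "r > 0"
    have r2: "r/2 > 0" using r by simp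
    obtain N1 where N1: "\<forall>k\<ge>N1. norm (hk k x - h x) < r/2" using lim[of x] r2 unfolding LIMSEQ_iff
      by blast
    show "\<exists>no. \<forall>k\<ge>no. norm (busemann p (Z k) x - h x) < r"
    proof (intro exI allI impI)
      fix k assume k: "max N1 (nat \<lceil>dist p x\<rceil> + nat \<lceil>2 / r\<rceil>) \<le> k"
      then have "x \<in> cball p (real k)" by simp linarith
      then have a: "\<bar>busemann p (Z k) x - hk k x\<bar> < 1 / real (Suc k)" using nk(1) unfolding Z_def by blast
      have "2 / r < real (Suc k)" using k by linarith
      then have "1 / real (Suc k) < r / 2" using r by (simp add: divide_less_eq field_simps)
      moreover have "\<bar>hk k x - h x\<bar> < r / 2" using N1 k by simp
      ultimately have "\<bar>busemann p (Z k) x - h x\<bar> < r" using a by linarith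
      then show "norm (busemann p (Z k) x - h x) < r" by simp
    qed
  qed
  ultimately show ?thesis unfolding horofunction_boundary_def by blast
qed

end

lemma topspace_co: "topspace (compact_open_topology :: ('a::topological_space \<Rightarrow> 'b::topological_space) topology) = UNIV"
proof -
  have "UNIV \<in> {{f::'a\<Rightarrow>'b. f ` K \<subseteq> U} | K U. compact K \<and> open U}"
    by (rule CollectI, rule exI[of _ "{}"], rule exI[of _ UNIV]) simp
  then show ?thesis unfolding compact_open_topology_def topology_generated_by_topspace by blast
qed

lemma topspace_horo: "topspace (horofunction_topology p) = horofunction_boundary p"
  unfolding horofunction_topology_def by (simp add: topspace_co)

lemma openin_horo: "openin (horofunction_topology p) W \<longleftrightarrow>
    (\<exists>W'. openin compact_open_topology W' \<and> W = W' \<inter> horofunction_boundary p)"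
  unfolding horofunction_topology_def openin_subtopology by blast

lemma istopology_quot:
  "istopology (\<lambda>U. U \<subseteq> equiv_class_in T R ` topspace T \<and>
      openin T {x \<in> topspace T. equiv_class_in T R x \<in> U})"
  unfolding istopology_def
proof (rule conjI; intro allI impI)
  fix S U assume S: "S \<subseteq> equiv_class_in T R ` topspace T \<and> openin T {x \<in> topspace T. equiv_class_in T R x \<in> S}"
    and U: "U \<subseteq> equiv_class_in T R ` topspace T \<and> openin T {x \<in> topspace T. equiv_class_in T R x \<in> U}"
  have "{x \<in> topspace T. equiv_class_in T R x \<in> S \<inter> U} =
      {x \<in> topspace T. equiv_class_in T R x \<in> S} \<inter> {x \<in> topspace T. equiv_class_in T R x \<in> U}" by blast
  then show "S \<inter> U \<subseteq> equiv_class_in T R ` topspace T \<and> openin T {x \<in> topspace T. equiv_class_in T R x \<in> S \<inter> U}"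
    using S U by auto
next
  fix K assume K: "\<forall>S\<in>K. S \<subseteq> equiv_class_in T R ` topspace T \<and> openin T {x \<in> topspace T. equiv_class_in T R x \<in> S}"
  have "{x \<in> topspace T. equiv_class_in T R x \<in> \<Union>K} = (\<Union>S\<in>K. {x \<in> topspace T. equiv_class_in T R x \<in> S})" by blast
  moreover have "openin T (\<Union>S\<in>K. {x \<in> topspace T. equiv_class_in T R x \<in> S})" using K by blast
  ultimately show "\<Union>K \<subseteq> equiv_class_in T R ` topspace T \<and> openin T {x \<in> topspace T. equiv_class_in T R x \<in> \<Union>K}"
    using K by auto
qed

lemma openin_quot: "openin (quotient_topology T R) U \<longleftrightarrow> U \<subseteq> equiv_class_in T R ` topspace T \<and>
      openin T {x \<in> topspace T. equiv_class_in T R x \<in> U}"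
  unfolding quotient_topology_def topology_inverse'[OF istopology_quot] ..

lemma topspace_quot: "topspace (quotient_topology T R) = equiv_class_in T R ` topspace T"
proof -
  have "openin (quotient_topology T R) (equiv_class_in T R ` topspace T)"
  proof -
    have "{x \<in> topspace T. equiv_class_in T R x \<in> equiv_class_in T R ` topspace T} = topspace T" by blast
    then show ?thesis unfolding openin_quot by simp
  qed
  then have "equiv_class_in T R ` topspace T \<subseteq> topspace (quotient_topology T R)" by (rule openin_subset)
  moreover have "topspace (quotient_topology T R) \<subseteq> equiv_class_in T R ` topspace T"
    using openin_quot[of T R "topspace (quotient_topology T R)"] by simp
  ultimately show ?thesis by blast
qed

lemma openin_gromov: "openin (gromov_boundary_topology p) U \<longleftrightarrow>
    U \<subseteq> gromov_boundary p \<and> (\<forall>\<xi>\<in>U. \<exists>r. gromov_nbhd p \<xi> r \<subseteq> U)"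
  unfolding gromov_boundary_topology_def topology_inverse'[OF istopology_gromov] ..

lemma topspace_gromov: "topspace (gromov_boundary_topology p) = gromov_boundary p"
proof -
  have "openin (gromov_boundary_topology p) (gromov_boundary p)"
    unfolding openin_gromov gromov_nbhd_def by blast
  then have "gromov_boundary p \<subseteq> topspace (gromov_boundary_topology p)" by (rule openin_subset)
  moreover have "topspace (gromov_boundary_topology p) \<subseteq> gromov_boundary p"
    using openin_gromov[of p "topspace (gromov_boundary_topology p)"] by simp
  ultimately show ?thesis by blast
qed

context hypsp
begin

abbreviation "cls \<equiv> equiv_class_in (horofunction_topology p) (sublinear_equiv p)"

lemma cls_eq: "h \<in> H \<Longrightarrow> cls h = {h' \<in> H. Phi h' = Phi h}"
  unfolding equiv_class_in_def topspace_horo using Phi_eq_iff by blast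

lemma cls_eq_iff: "h \<in> H \<Longrightarrow> h' \<in> H \<Longrightarrow> cls h = cls h' \<longleftrightarrow> Phi h = Phi h'"
  using cls_eq by blast

lemma surj_Phi:
  assumes "\<xi> \<in> gromov_boundary p"
  shows "\<exists>h\<in>H. Phi h = \<xi>"
proof -
  obtain x where cx: "converges_at_infinity p x" and \<xi>: "\<xi> = {y. converges_at_infinity p y \<and> seq_equiv p x y}"
    using assms unfolding gromov_boundary_def by blast
  obtain r h where r: "strict_mono r" and lim: "\<And>z. (\<lambda>n. busemann p (x (r n)) z) \<longlonglongrightarrow> h z"
    using lip_subseq[of "\<lambda>n. busemann p (x n)"] lip1_busemann busemann_p by blast
  have rge: "r n \<ge> n" for n using r by (rule seq_suble)
  have "filterlim (\<lambda>n. dist p (x (r n))) at_top sequentially"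
    unfolding filterlim_at_top eventually_sequentially
  proof
    fix M :: real
    obtain N where N: "\<forall>i\<ge>N. \<forall>j\<ge>N. M \<le> gp (x i) (x j)" using cx unfolding converges_at_infinity_def by blast
    show "\<exists>N. \<forall>n\<ge>N. M \<le> dist p (x (r n))"
    proof (intro exI allI impI)
      fix n assume "N \<le> n"
      then have "N \<le> r n" using rge[of n] by linarith
      then have "M \<le> gp (x (r n)) (x (r n))" using N by blast
      then show "M \<le> dist p (x (r n))" by (simp add: gp_self)
    qed
  qed
  then have hH: "h \<in> H" unfolding horofunction_boundary_def using lim
    by (intro CollectI exI[of _ "\<lambda>n. x (r n)"]) simp
  have txr: "tinf (\<lambda>i. hg p h (x (r i)))" unfolding tinf_def
  proof
    fix M
    obtain N where N: "\<forall>i\<ge>N. \<forall>j\<ge>N. M \<le> gp (x i) (x j)" using cx unfolding converges_at_infinity_def by blast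
    show "\<exists>N. \<forall>i\<ge>N. M \<le> hg p h (x (r i))"
    proof (intro exI allI impI)
      fix i assume i: "N \<le> i"
      have "(\<lambda>n. gp (x (r i)) (x (r n))) \<longlonglongrightarrow> hg p h (x (r i))"
        by (rule hg_tendsto[OF lim])
      moreover have "\<forall>n\<ge>N. M \<le> gp (x (r i)) (x (r n))"
      proof (intro allI impI)
        fix n assume "N \<le> n"
        then have "N \<le> r n" "N \<le> r i" using rge[of n] rge[of i] i by linarith+
        then show "M \<le> gp (x (r i)) (x (r n))" using N by blast
      qed
      ultimately show "M \<le> hg p h (x (r i))" by (meson LIMSEQ_le_const)
    qed
  qed
  have "Phi h = \<xi>"
  proof (intro set_eqI iffI)
    fix y assume "y \<in> Phi h"
    then have cy: "converges_at_infinity p y" and ty: "tinf (\<lambda>i. hg p h (y i))" using Phi_char[OF hH] by auto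
    have "seq_equiv p x y" unfolding seq_equiv_def
    proof
      fix M
      obtain N1 where N1: "\<forall>i\<ge>N1. \<forall>j\<ge>N1. M + \<delta> \<le> gp (x i) (x j)" using cx unfolding converges_at_infinity_def by blast
      obtain N2 where N2: "\<forall>i\<ge>N2. M + 2*\<delta> \<le> hg p h (x (r i))" using txr unfolding tinf_def by blast
      obtain N3 where N3: "\<forall>i\<ge>N3. M + 2*\<delta> \<le> hg p h (y i)" using ty unfolding tinf_def by blast
      define N where "N = max N1 (max N2 N3)"
      show "\<exists>N. \<forall>i\<ge>N. \<forall>j\<ge>N. M \<le> gp (x i) (y j)"
      proof (intro exI allI impI)
        fix i j assume i: "N \<le> i" and j: "N \<le> j"
        have k1: "N1 \<le> r N" using rge[of N] unfolding N_def by linarith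
        have a1: "M + \<delta> \<le> gp (x i) (x (r N))" using N1 k1 i unfolding N_def by auto
        have a2: "M + 2*\<delta> \<le> hg p h (x (r N))" using N2 unfolding N_def by auto
        have a3: "M + 2*\<delta> \<le> hg p h (y j)" using N3 j unfolding N_def by auto
        have "gp (x (r N)) (y j) \<ge> min (hg p h (x (r N))) (hg p h (y j)) - \<delta>" by (rule hypG[OF hH])
        then have a4: "gp (x (r N)) (y j) \<ge> M + \<delta>" using a2 a3 by (simp add: min_def split: if_splits)
        have "gp (x i) (y j) \<ge> min (gp (x i) (x (r N))) (gp (x (r N)) (y j)) - \<delta>" by (rule hyp)
        then show "M \<le> gp (x i) (y j)" using a1 a4 by (simp add: min_def split: if_splits)
      qed
    qed
    with cy show "y \<in> \<xi>" unfolding \<xi> by blast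
  next
    fix y assume "y \<in> \<xi>"
    then have cy: "converges_at_infinity p y" and sy: "seq_equiv p x y" unfolding \<xi> by auto
    have "tinf (\<lambda>j. hg p h (y j))" unfolding tinf_def
    proof
      fix M
      obtain N1 where N1: "\<forall>i\<ge>N1. M + \<delta> \<le> hg p h (x (r i))" using txr unfolding tinf_def by blast
      obtain N2 where N2: "\<forall>i\<ge>N2. \<forall>j\<ge>N2. M + \<delta> \<le> gp (x i) (y j)" using sy unfolding seq_equiv_def by blast
      define i where "i = max N1 N2"
      show "\<exists>N. \<forall>j\<ge>N. M \<le> hg p h (y j)"
      proof (intro exI allI impI)
        fix j assume j: "N2 \<le> j"
        have "N2 \<le> r i" using rge[of i] unfolding i_def by linarith
        then have "M + \<delta> \<le> gp (x (r i)) (y j)" using N2 j by blast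
        then have a1: "M + \<delta> \<le> gp (y j) (x (r i))" by (simp add: gp_sym)
        have a2: "M + \<delta> \<le> hg p h (x (r i))" using N1 unfolding i_def by auto
        have "hg p h (y j) \<ge> min (gp (y j) (x (r i))) (hg p h (x (r i))) - \<delta>" by (rule hypL[OF hH])
        then show "M \<le> hg p h (y j)" using a1 a2 by (simp add: min_def split: if_splits)
      qed
    qed
    then show "y \<in> Phi h" using Phi_char[OF hH] cy by blast
  qed
  with hH show ?thesis by blast
qed

lemma nbhd_step:
  assumes h: "h \<in> H" and h': "h' \<in> H" and w: "\<bar>h' (zr h R) - h (zr h R)\<bar> < 1"
  shows "Phi h' \<in> gromov_nbhd p (Phi h) (real R - 1/2 - 2*\<delta>)"
proof -
  define w where "w = zr h R"
  have hw: "hg p h w = real R" unfolding w_def by (rule hg_zr[OF h])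
  have "h w = - real R" "dist p w = real R" unfolding w_def using zr[OF h] by auto
  moreover have "h' w - h w < 1" using w unfolding w_def by (simp add: abs_less_iff)
  ultimately have h'w: "hg p h' w > real R - 1/2" unfolding hg_def by simp
  have main: "gp (zr h i) (zr h' j) \<ge> real R - 1/2 - 2*\<delta>" if i: "i \<ge> R" and j: "j \<ge> R" for i j
  proof -
    have "gp (zr h i) w \<ge> min (hg p h (zr h i)) (hg p h w) - \<delta>" by (rule hypG[OF h])
    then have a1: "gp (zr h i) w \<ge> real R - \<delta>" using hw hg_zr[OF h, of i] i by (simp add: min_def split: if_splits)
    have "gp w (zr h' j) \<ge> min (hg p h' w) (hg p h' (zr h' j)) - \<delta>" by (rule hypG[OF h'])
    then have a2: "gp w (zr h' j) \<ge> real R - 1/2 - \<delta>" using h'w hg_zr[OF h', of j] j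
      by (simp add: min_def split: if_splits)
    have "gp (zr h i) (zr h' j) \<ge> min (gp (zr h i) w) (gp w (zr h' j)) - \<delta>" by (rule hyp)
    then show ?thesis using a1 a2 by (simp add: min_def split: if_splits)
  qed
  have ev: "\<forall>\<epsilon>>0. \<exists>N. \<forall>i\<ge>N. \<forall>j\<ge>N. real R - 1/2 - 2*\<delta> - \<epsilon> \<le> gp (zr h i) (zr h' j)"
  proof (intro allI impI)
    fix \<epsilon> :: real assume e: "\<epsilon> > 0"
    show "\<exists>N. \<forall>i\<ge>N. \<forall>j\<ge>N. real R - 1/2 - 2*\<delta> - \<epsilon> \<le> gp (zr h i) (zr h' j)"
    proof (intro exI[of _ R] allI impI)
      fix i j assume "R \<le> i" "R \<le> j"
      then show "real R - 1/2 - 2*\<delta> - \<epsilon> \<le> gp (zr h i) (zr h' j)" using main[of i j] e by linarith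
    qed
  qed
  show ?thesis unfolding gromov_nbhd_def
  proof (intro CollectI conjI bexI)
    show "Phi h' \<in> gromov_boundary p" by (rule Phi_in[OF h'])
    show "zr h \<in> Phi h" by (rule zr_in_Phi[OF h])
    show "zr h' \<in> Phi h'" by (rule zr_in_Phi[OF h'])
  qed (rule ev)
qed

lemma Phi_cont:
  assumes U: "openin (gromov_boundary_topology p) U"
  shows "openin (horofunction_topology p) {h \<in> H. Phi h \<in> U}"
proof -
  have "\<forall>h. \<exists>r. h \<in> H \<and> Phi h \<in> U \<longrightarrow> gromov_nbhd p (Phi h) r \<subseteq> U"
    using U unfolding openin_gromov by blast
  from choice[OF this] obtain rr where rr: "\<And>h. h \<in> H \<Longrightarrow> Phi h \<in> U \<Longrightarrow> gromov_nbhd p (Phi h) (rr h) \<subseteq> U"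
    by blast
  define R where "R h = nat \<lceil>rr h + 1 + 2*\<delta>\<rceil>" for h
  define Nb where "Nb h = {f::'a\<Rightarrow>real. f ` {zr h (R h)} \<subseteq> ball (h (zr h (R h))) 1}" for h
  define W' where "W' = \<Union>(Nb ` {h \<in> H. Phi h \<in> U})"
  have "generate_topology_on {{f::'a\<Rightarrow>real. f ` K \<subseteq> V} | K V. compact K \<and> open V} W'"
    unfolding W'_def
  proof (rule generate_topology_on.UN, elim imageE)
    fix k h assume kh: "k = Nb h"
    have "Nb h \<in> {{f::'a\<Rightarrow>real. f ` K \<subseteq> V} | K V. compact K \<and> open V}" unfolding Nb_def
      by (rule CollectI, rule exI[of _ "{zr h (R h)}"], rule exI[of _ "ball (h (zr h (R h))) 1"]) simp
    then show "generate_topology_on {{f::'a\<Rightarrow>real. f ` K \<subseteq> V} | K V. compact K \<and> open V} k"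
      unfolding kh by (rule generate_topology_on.Basis)
  qed
  then have W'o: "openin compact_open_topology W'"
    unfolding compact_open_topology_def openin_topology_generated_by_iff .
  have "{h \<in> H. Phi h \<in> U} = W' \<inter> H"
  proof (intro set_eqI iffI)
    fix h assume "h \<in> {h \<in> H. Phi h \<in> U}"
    moreover then have "h \<in> Nb h" unfolding Nb_def by simp
    ultimately show "h \<in> W' \<inter> H" unfolding W'_def by blast
  next
    fix h' assume "h' \<in> W' \<inter> H"
    then obtain h where h: "h \<in> H" "Phi h \<in> U" and h': "h' \<in> H" "h' \<in> Nb h" unfolding W'_def by blast
    then have "\<bar>h' (zr h (R h)) - h (zr h (R h))\<bar> < 1" unfolding Nb_def by (simp add: dist_real_def abs_minus_commute)
    then have "Phi h' \<in> gromov_nbhd p (Phi h) (real (R h) - 1/2 - 2*\<delta>)" by (rule nbhd_step[OF h(1) h'(1)])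
    moreover have "rr h \<le> real (R h) - 1/2 - 2*\<delta>" unfolding R_def by linarith
    ultimately have "Phi h' \<in> gromov_nbhd p (Phi h) (rr h)" using gromov_nbhd_mono by blast
    then show "h' \<in> {h \<in> H. Phi h \<in> U}" using rr[OF h] h' by blast
  qed
  then show ?thesis unfolding openin_horo using W'o by blast
qed

end

context hypsp
begin

definition pick :: "(nat \<Rightarrow> 'a) set \<Rightarrow> ('a \<Rightarrow> real)" where
  "pick \<xi> = (SOME h. h \<in> H \<and> Phi h = \<xi>)"

lemma pick: "\<xi> \<in> gromov_boundary p \<Longrightarrow> pick \<xi> \<in> H \<and> Phi (pick \<xi>) = \<xi>"
proof -
  assume a: "\<xi> \<in> gromov_boundary p"
  from surj_Phi[OF a] have "\<exists>h. h \<in> H \<and> Phi h = \<xi>" by blast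
  then show ?thesis unfolding pick_def by (rule someI_ex)
qed

lemma hk_bound:
  assumes h0: "h0 \<in> H" and hK: "hK \<in> H" and nb: "Phi hK \<in> gromov_nbhd p (Phi h0) K"
    and Km: "K \<ge> real m"
  shows "hg p hK (zr h0 m) \<ge> real m - 3*\<delta> - 1"
proof -
  obtain a b where a: "a \<in> Phi h0" and b: "b \<in> Phi hK"
    and ab: "\<forall>\<epsilon>>0. \<exists>N. \<forall>i\<ge>N. \<forall>j\<ge>N. K - \<epsilon> \<le> gp (a i) (b j)"
    using nb unfolding gromov_nbhd_def mem_Collect_eq by blast
  have "\<exists>N. \<forall>i\<ge>N. \<forall>j\<ge>N. K - 1 \<le> gp (a i) (b j)" using spec[OF ab, of 1] by simp
  then obtain N where N: "\<forall>i\<ge>N. \<forall>j\<ge>N. K - 1 \<le> gp (a i) (b j)" by blast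
  have "tinf (\<lambda>i. hg p h0 (a i))" using a Phi_char[OF h0] by blast
  then obtain N1 where N1: "\<forall>i\<ge>N1. real m \<le> hg p h0 (a i)" unfolding tinf_def by blast
  have "tinf (\<lambda>i. hg p hK (b i))" using b Phi_char[OF hK] by blast
  then obtain N2 where N2: "\<forall>i\<ge>N2. real m \<le> hg p hK (b i)" unfolding tinf_def by blast
  define i where "i = max N N1"
  define j where "j = max N N2"
  define w where "w = zr h0 m"
  have hw: "hg p h0 w = real m" unfolding w_def by (rule hg_zr[OF h0])
  have t1: "K - 1 \<le> gp (a i) (b j)" using N unfolding i_def j_def by simp
  have t2: "real m \<le> hg p h0 (a i)" using N1 unfolding i_def by simp
  have t3: "real m \<le> hg p hK (b j)" using N2 unfolding j_def by simp
  have "gp w (a i) \<ge> min (hg p h0 w) (hg p h0 (a i)) - \<delta>" by (rule hypG[OF h0])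
  then have s1: "gp w (a i) \<ge> real m - \<delta>" using hw t2 by (simp add: min_def split: if_splits)
  have "gp w (b j) \<ge> min (gp w (a i)) (gp (a i) (b j)) - \<delta>" by (rule hyp)
  then have s2: "gp w (b j) \<ge> real m - 2*\<delta> - 1" using s1 t1 Km delta_nonneg
    by (simp add: min_def split: if_splits)
  have "hg p hK w \<ge> min (gp w (b j)) (hg p hK (b j)) - \<delta>" by (rule hypL[OF hK])
  then show ?thesis using s2 t3 delta_nonneg unfolding w_def[symmetric] by (simp add: min_def split: if_splits)
qed

definition gmap :: "(nat \<Rightarrow> 'a) set \<Rightarrow> ('a \<Rightarrow> real) set" where
  "gmap \<xi> = cls (pick \<xi>)"

lemma g_cont:
  assumes U: "openin (quotient_topology (horofunction_topology p) (sublinear_equiv p)) U"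
  shows "openin (gromov_boundary_topology p) {\<xi> \<in> gromov_boundary p. gmap \<xi> \<in> U}"
  unfolding openin_gromov
proof (intro conjI ballI)
  show "{\<xi> \<in> gromov_boundary p. gmap \<xi> \<in> U} \<subseteq> gromov_boundary p" by blast
  fix \<xi> assume \<xi>S: "\<xi> \<in> {\<xi> \<in> gromov_boundary p. gmap \<xi> \<in> U}"
  then have \<xi>: "\<xi> \<in> gromov_boundary p" and gU: "cls (pick \<xi>) \<in> U" unfolding gmap_def by auto
  define h0 where "h0 = pick \<xi>"
  have h0: "h0 \<in> H" "Phi h0 = \<xi>" using pick[OF \<xi>] unfolding h0_def by auto
  show "\<exists>r. gromov_nbhd p \<xi> r \<subseteq> {\<xi> \<in> gromov_boundary p. gmap \<xi> \<in> U}"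
  proof (rule ccontr)
    assume "\<not> ?thesis"
    then have "\<forall>k::nat. \<exists>\<eta>. \<eta> \<in> gromov_nbhd p \<xi> (real k) \<and> \<eta> \<notin> {\<xi> \<in> gromov_boundary p. gmap \<xi> \<in> U}"
      by blast
    from choice[OF this] obtain \<eta>s where \<eta>s: "\<And>k. \<eta>s k \<in> gromov_nbhd p \<xi> (real k)"
      "\<And>k. \<eta>s k \<notin> {\<xi> \<in> gromov_boundary p. gmap \<xi> \<in> U}" by blast
    have \<eta>G: "\<eta>s k \<in> gromov_boundary p" for k using \<eta>s(1)[of k] unfolding gromov_nbhd_def by blast
    define hk where "hk k = pick (\<eta>s k)" for k
    have hkH: "hk k \<in> H" and hkP: "Phi (hk k) = \<eta>s k" for k using pick[OF \<eta>G] unfolding hk_def by auto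
    have notU: "cls (hk k) \<notin> U" for k using \<eta>s(2)[of k] \<eta>G[of k] unfolding gmap_def hk_def by blast
    obtain r hs where r: "strict_mono r" and lim: "\<And>x. (\<lambda>n. hk (r n) x) \<longlonglongrightarrow> hs x"
      using lip_subseq[of hk] horo_lip1[OF hkH] horo_p[OF hkH] by blast
    have hsH: "hs \<in> H" by (rule H_closed[of "\<lambda>n. hk (r n)", OF hkH lim])
    have rge: "r n \<ge> n" for n using r by (rule seq_suble)
    have lowb: "hg p hs (zr h0 m) \<ge> real m - 3*\<delta> - 1" for m
    proof -
      have "(\<lambda>n. hg p (hk (r n)) (zr h0 m)) \<longlonglongrightarrow> hg p hs (zr h0 m)"
        unfolding hg_def by (auto intro!: tendsto_intros lim)
      moreover have "\<forall>n\<ge>m. real m - 3*\<delta> - 1 \<le> hg p (hk (r n)) (zr h0 m)"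
      proof (intro allI impI)
        fix n assume "m \<le> n"
        then have "real (r n) \<ge> real m" using rge[of n] by linarith
        moreover have "Phi (hk (r n)) \<in> gromov_nbhd p (Phi h0) (real (r n))" using \<eta>s(1) hkP h0(2) by simp
        ultimately show "real m - 3*\<delta> - 1 \<le> hg p (hk (r n)) (zr h0 m)"
          using hk_bound[OF h0(1) hkH] by blast
      qed
      ultimately show ?thesis by (meson LIMSEQ_le_const)
    qed
    have "tinf (\<lambda>m. hg p hs (zr h0 m))" unfolding tinf_def
    proof
      fix M :: real
      show "\<exists>N. \<forall>m\<ge>N. M \<le> hg p hs (zr h0 m)"
      proof (intro exI allI impI)
        fix m assume "nat \<lceil>M + 3*\<delta> + 1\<rceil> \<le> m"
        then have "M \<le> real m - 3*\<delta> - 1" by linarith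
        then show "M \<le> hg p hs (zr h0 m)" using lowb[of m] by linarith
      qed
    qed
    then have "zr h0 \<in> Phi hs" using Phi_char[OF hsH] zr_conv[OF h0(1)] by blast
    then have "Phi hs = Phi h0" using Phi_eq_if_common(1)[OF hsH h0(1) _ zr_in_Phi[OF h0(1)]] by blast
    then have "cls hs = cls h0" using cls_eq_iff[OF hsH h0(1)] by blast
    then have hsU: "cls hs \<in> U" using gU unfolding h0_def by simp
    have "openin (horofunction_topology p) {x \<in> H. cls x \<in> U}"
      using U unfolding openin_quot topspace_horo by blast
    then obtain W' where W': "openin compact_open_topology W'" "{x \<in> H. cls x \<in> U} = W' \<inter> H"
      unfolding openin_horo by blast
    have hsW: "hs \<in> W'" using W'(2) hsH hsU by blast
    have "eventually (\<lambda>n. hk (r n) \<in> W') sequentially"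
    proof (rule co_open_seq[OF W'(1) hsW])
      show "continuous_on UNIV hs" by (rule lip1_continuous[OF horo_lip1[OF hsH]])
      fix K :: "'a set" and e :: real assume "compact K" "e > 0"
      then show "eventually (\<lambda>n. \<forall>x\<in>K. \<bar>hk (r n) x - hs x\<bar> < e) sequentially"
        using unif[of K "\<lambda>n. hk (r n)" hs e] horo_lip1[OF hkH] horo_lip1[OF hsH] lim by blast
    qed
    then obtain N where "hk (r N) \<in> W'" unfolding eventually_sequentially by blast
    then have "cls (hk (r N)) \<in> U" using W'(2) hkH by blast
    then show False using notU by blast
  qed
qed

definition fmap :: "('a \<Rightarrow> real) set \<Rightarrow> (nat \<Rightarrow> 'a) set" where
  "fmap C = Phi (SOME h. h \<in> C)"

lemma fmap_cls: "h \<in> H \<Longrightarrow> fmap (cls h) = Phi h"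
proof -
  assume h: "h \<in> H"
  have "h \<in> cls h" using cls_eq[OF h] h by blast
  then have "(SOME h'. h' \<in> cls h) \<in> cls h" by (rule someI[of "\<lambda>h'. h' \<in> cls h"])
  then show ?thesis unfolding fmap_def using cls_eq[OF h] by blast
qed

theorem main:
  "quotient_topology (horofunction_topology p) (sublinear_equiv p)
     homeomorphic_space gromov_boundary_topology p"
  unfolding homeomorphic_space_def
proof (intro exI)
  let ?Q = "quotient_topology (horofunction_topology p) (sublinear_equiv p)"
  let ?G = "gromov_boundary_topology p"
  have tQ: "topspace ?Q = cls ` H" by (simp add: topspace_quot topspace_horo)
  have tG: "topspace ?G = gromov_boundary p" by (rule topspace_gromov)
  show "homeomorphic_maps ?Q ?G fmap gmap"
    unfolding homeomorphic_maps_def continuous_map tQ tG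
  proof (intro conjI allI impI ballI)
    show "fmap ` cls ` H \<subseteq> gromov_boundary p" using fmap_cls Phi_in by auto
    show "gmap ` gromov_boundary p \<subseteq> cls ` H" unfolding gmap_def using pick by blast
    fix U assume U: "openin ?G U"
    have e: "{x \<in> H. cls x \<in> {C \<in> cls ` H. fmap C \<in> U}} = {h \<in> H. Phi h \<in> U}"
      using fmap_cls by auto
    show "openin ?Q {C \<in> cls ` H. fmap C \<in> U}"
      unfolding openin_quot topspace_horo e using Phi_cont[OF U] by blast
  next
    fix U assume "openin ?Q U"
    then show "openin ?G {\<xi> \<in> gromov_boundary p. gmap \<xi> \<in> U}" by (rule g_cont)
  next
    fix C assume "C \<in> cls ` H"
    then obtain h where h: "h \<in> H" "C = cls h" by blast
    have "Phi h \<in> gromov_boundary p" by (rule Phi_in[OF h(1)])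
    then have "pick (Phi h) \<in> H" "Phi (pick (Phi h)) = Phi h" using pick by auto
    then show "gmap (fmap C) = C" unfolding h(2) fmap_cls[OF h(1)] gmap_def
      using cls_eq_iff[OF _ h(1)] by blast
  next
    fix \<xi> assume "\<xi> \<in> gromov_boundary p"
    then show "fmap (gmap \<xi>) = \<xi>" unfolding gmap_def using pick fmap_cls by auto
  qed
qed

end

theorem corollary2p7:
  fixes p :: "'a::metric_space"
  assumes "proper_metric TYPE('a)"
    and "geodesic_metric TYPE('a)"
    and "gromov_hyperbolic TYPE('a)"
  shows "quotient_topology (horofunction_topology p) (sublinear_equiv p)
           homeomorphic_space gromov_boundary_topology p"
proof -
  obtain \<delta> where d: "\<delta> \<ge> 0" and hy: "\<forall>w x y z::'a.
      gromov_product w x z \<ge> min (gromov_product w x y) (gromov_product w y z) - \<delta>"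
    using assms(3) unfolding gromov_hyperbolic_def by blast
  interpret hypsp p \<delta>
  proof
    show "\<And>x r. compact (cball (x::'a) r)" using assms(1) unfolding proper_metric_def by blast
    show "\<And>x y::'a. \<exists>\<gamma>::real \<Rightarrow> 'a. \<gamma> 0 = x \<and> \<gamma> (dist x y) = y \<and>
      (\<forall>s\<in>{0..dist x y}. \<forall>t\<in>{0..dist x y}. dist (\<gamma> s) (\<gamma> t) = \<bar>s - t\<bar>)"
      using assms(2) unfolding geodesic_metric_def by blast
    show "\<delta> \<ge> 0" by (rule d)
    show "\<And>w x y z::'a. gromov_product w x z \<ge> min (gromov_product w x y) (gromov_product w y z) - \<delta>"
      using hy by blast
  qed
  show ?thesis by (rule main)
qed

end
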